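(* Let $\Pi$ be the elliptic curve $u^2=s(s^2+s+7)$ and define rational functions on $\Pi$ $$y=\frac12-\frac{(3s^8-2s^7-4s^6-204s^5-536s^4-1738s^3-5064s^2-4808s-3199)\,u}{4(s^6+196s^3+189s^2+756s+154)(s^2+s+7)(s+1)},$$ $$t=\frac12-\frac{(s^9-84s^6-378s^5-1512s^4-5208s^3-7236s^2-8127s-784)\,u}{432\,s(s+1)^2(s^2+s+7)^2}.$$ Then, using $t$ as a local coordinate on $\Pi$ away from its critical points, $y(t)$ is a solution of $\mathrm{P}_{\mathrm{VI}}$ with parameters $(\theta_1,\theta_2,\theta_3,\theta_4)=(2/7,2/7,2/7,1/3)$; as a cover of the $t$-line, $t:\Pi\to\mathbb{P}^1$ has degree $18$.
   Context: $\mathrm{P}_{\mathrm{VI}}$ is the equation $$\frac{d^2y}{dt^2}=\frac12\Big(\frac1y+\frac1{y-1}+\frac1{y-t}\Big)\Big(\frac{dy}{dt}\Big)^2-\Big(\frac1t+\frac1{t-1}+\frac1{y-t}\Big)\frac{dy}{dt}+\frac{y(y-1)(y-t)}{t^2(t-1)^2}\Big(\alpha+\beta\frac{t}{y^2}+\gamma\frac{t-1}{(y-1)^2}+\delta\frac{t(t-1)}{(y-t)^2}\Big),$$ with $\alpha=(\theta_4-1)^2/2$, $\beta=-\theta_1^2/2$, $\gamma=\theta_3^2/2$, $\delta=(1-\theta_2^2)/2$. When $y,t$ are given as rational functions of a parameter on a curve, derivatives with respect to $t$ are computed via the chain rule. *)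

theory Defs
  imports "HOL-Analysis.Analysis"
begin

definition on_Pi :: "complex \<Rightarrow> complex \<Rightarrow> bool" where
  "on_Pi s u \<longleftrightarrow> u^2 = s * (s^2 + s + 7)"

definition y_num :: "complex \<Rightarrow> complex" where
  "y_num s = 3* s^8 - 2* s^7 - 4* s^6 - 204* s^5 - 536* s^4 - 1738* s^3 - 5064* s^2 - 4808* s - 3199"

definition y_den :: "complex \<Rightarrow> complex" where
  "y_den s = 4 * (s^6 + 196* s^3 + 189* s^2 + 756* s + 154) * (s^2 + s + 7) * (s + 1)"

definition y_fun :: "complex \<Rightarrow> complex \<Rightarrow> complex" where
  "y_fun s u = 1/2 - y_num s * u / y_den s"

definition t_num :: "complex \<Rightarrow> complex" where
  "t_num s = s^9 - 84* s^6 - 378* s^5 - 1512* s^4 - 5208* s^3 - 7236* s^2 - 8127* s - 784"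

definition t_den :: "complex \<Rightarrow> complex" where
  "t_den s = 432 * s * (s + 1)^2 * (s^2 + s + 7)^2"

definition t_fun :: "complex \<Rightarrow> complex \<Rightarrow> complex" where
  "t_fun s u = 1/2 - t_num s * u / t_den s"

definition PVI_rhs :: "complex \<Rightarrow> complex \<Rightarrow> complex \<Rightarrow> complex \<Rightarrow> complex \<Rightarrow> complex \<Rightarrow> complex \<Rightarrow> complex" where
  "PVI_rhs \<theta>1 \<theta>2 \<theta>3 \<theta>4 t y y' =
     (let \<alpha> = (\<theta>4 - 1)^2 / 2; \<beta> = - (\<theta>1^2) / 2; \<gamma> = \<theta>3^2 / 2; \<delta> = (1 - \<theta>2^2) / 2 in
      1/2 * (1/y + 1/(y - 1) + 1/(y - t)) * y'^2
      - (1/t + 1/(t - 1) + 1/(y - t)) * y'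
      + y * (y - 1) * (y - t) / (t^2 * (t - 1)^2)
        * (\<alpha> + \<beta> * t / y^2 + \<gamma> * (t - 1) / (y - 1)^2 + \<delta> * t * (t - 1) / (y - t)^2))"

definition solves_PVI_on :: "complex \<Rightarrow> complex \<Rightarrow> complex \<Rightarrow> complex \<Rightarrow> (complex \<Rightarrow> complex) \<Rightarrow> complex set \<Rightarrow> bool" where
  "solves_PVI_on \<theta>1 \<theta>2 \<theta>3 \<theta>4 Y T \<longleftrightarrow>
     (\<forall>\<tau>\<in>T. \<tau> \<noteq> 0 \<and> \<tau> \<noteq> 1 \<and> Y \<tau> \<noteq> 0 \<and> Y \<tau> \<noteq> 1 \<and> Y \<tau> \<noteq> \<tau> \<longrightarrow>
        deriv (deriv Y) \<tau> = PVI_rhs \<theta>1 \<theta>2 \<theta>3 \<theta>4 \<tau> (Y \<tau>) (deriv Y \<tau>))"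

definition t_fiber :: "complex \<Rightarrow> (complex \<times> complex) set" where
  "t_fiber c = {(s, u). on_Pi s u \<and> t_den s \<noteq> 0 \<and> t_fun s u = c}"

end

theory Submission
  imports Defs "HOL-Computational_Algebra.Fundamental_Theorem_Algebra"
begin

definition qK :: "complex \<Rightarrow> complex" where "qK s = 59480107456 + 204219148672 * s + 1151031856744 * s^2 + 3182996151860 * s^3 + 4626615906416 * s^4 + 4956773703098 * s^5 + 4421330994612 * s^6 + 3255705229728 * s^7 + 1949926001457 * s^8 + 972927243400 * s^9 + 399392042896 * s^10 + 143858158696 * s^11 + 45414528068 * s^12 + 14201086508 * s^13 + 4321463384 * s^14 + 1317669504 * s^15 + 366884718 * s^16 + 89664936 * s^17 + 17916040 * s^18 + 3011524 * s^19 + 358756 * s^20 + 37226 * s^21 + 1268 * s^22 + 128 * s^23 + 9 * s^24"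
definition qa5 :: "complex \<Rightarrow> complex" where "qa5 s = (-847) + (-1139) * s + (-534) * s^2 + (-38) * s^3 + (-43) * s^4 + 9 * s^5"
definition qp1 :: "complex \<Rightarrow> complex" where "qp1 s = 1 * s"
definition qp10 :: "complex \<Rightarrow> complex" where "qp10 s = (-49) + (-6) * s^2 + 1 * s^3"
definition qp2 :: "complex \<Rightarrow> complex" where "qp2 s = 1 + 1 * s"
definition qp3 :: "complex \<Rightarrow> complex" where "qp3 s = 7 + 1 * s + 1 * s^2"
definition qp4 :: "complex \<Rightarrow> complex" where "qp4 s = (-1) + 1 * s"
definition qp5 :: "complex \<Rightarrow> complex" where "qp5 s = 7 + 4 * s + 1 * s^2"
definition qp6 :: "complex \<Rightarrow> complex" where "qp6 s = 16 + 1 * s + 1 * s^2"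
definition qp7 :: "complex \<Rightarrow> complex" where "qp7 s = 154 + 756 * s + 189 * s^2 + 196 * s^3 + 1 * s^6"
definition qp8 :: "complex \<Rightarrow> complex" where "qp8 s = (-7) + 1 * s"
definition qr10 :: "complex \<Rightarrow> complex" where "qr10 s = 492646 + 1491924 * s + 1532643 * s^2 + 953904 * s^3 + 401856 * s^4 + 136248 * s^5 + 24066 * s^6 + 5424 * s^7 + 114 * s^8 + 20 * s^9 + 3 * s^10"
definition qw3 :: "complex \<Rightarrow> complex" where "qw3 s = (-154) + (-6) * s + (-3) * s^2 + 1 * s^3"
definition qz15 :: "complex \<Rightarrow> complex" where "qz15 s = (-120736) + (-635040) * s + (-4207140) * s^2 + (-3625375) * s^3 + (-3593970) * s^4 + (-1843884) * s^5 + (-836200) * s^6 + (-198045) * s^7 + (-43740) * s^8 + (-10340) * s^9 + (-1620) * s^10 + (-405) * s^11 + (-50) * s^12 + 1 * s^15"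
definition fd :: "complex \<Rightarrow> complex" where "fd s = 7 + 2 * s + 3 * s^2"
definition Nd :: "complex \<Rightarrow> complex" where "Nd s = (-8127) + (-14472) * s + (-15624) * s^2 + (-6048) * s^3 + (-1890) * s^4 + (-504) * s^5 + 9 * s^8"
definition Md :: "complex \<Rightarrow> complex" where "Md s = (-4808) + (-10128) * s + (-5214) * s^2 + (-2144) * s^3 + (-1020) * s^4 + (-24) * s^5 + (-14) * s^6 + 24 * s^7"
definition Dx :: "complex \<Rightarrow> complex" where "Dx s = 21168 * s + 48384 * s^2 + 39744 * s^3 + 19872 * s^4 + 8640 * s^5 + 1728 * s^6 + 432 * s^7"
definition Ex :: "complex \<Rightarrow> complex" where "Ex s = 4312 + 26096 * s + 30716 * s^2 + 18200 * s^3 + 10808 * s^4 + 2324 * s^5 + 812 * s^6 + 32 * s^7 + 8 * s^8 + 4 * s^9"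
definition Dd :: "complex \<Rightarrow> complex" where "Dd s = 21168 + 96768 * s + 119232 * s^2 + 79488 * s^3 + 43200 * s^4 + 10368 * s^5 + 3024 * s^6"
definition Ed :: "complex \<Rightarrow> complex" where "Ed s = 26096 + 61432 * s + 54600 * s^2 + 43232 * s^3 + 11620 * s^4 + 4872 * s^5 + 224 * s^6 + 64 * s^7 + 36 * s^8"
definition gG :: "complex \<Rightarrow> complex" where "gG s = 3448522 * s + 14384636 * s^2 + 23649185 * s^3 + 22414966 * s^4 + 15001434 * s^5 + 7609035 * s^6 + 3016062 * s^7 + 904848 * s^8 + 228570 * s^9 + 35966 * s^10 + 5833 * s^11 + 178 * s^12 + 26 * s^13 + 3 * s^14"
definition hH :: "complex \<Rightarrow> complex" where "hH s = (-2656192) + (-25106620) * s + (-59941504) * s^2 + (-2180500) * s^3 + 9925832 * s^4 + 35356685 * s^5 + 23678564 * s^6 + 13998110 * s^7 + 5027876 * s^8 + 1518475 * s^9 + 294952 * s^10 + 70336 * s^11 + 11536 * s^12 + 1987 * s^13 + 436 * s^14 + 22 * s^15 + 4 * s^16 + 1 * s^17"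
definition gGd :: "complex \<Rightarrow> complex" where "gGd s = 3448522 + 28769272 * s + 70947555 * s^2 + 89659864 * s^3 + 75007170 * s^4 + 45654210 * s^5 + 21112434 * s^6 + 7238784 * s^7 + 2057130 * s^8 + 359660 * s^9 + 64163 * s^10 + 2136 * s^11 + 338 * s^12 + 42 * s^13"
definition hHd :: "complex \<Rightarrow> complex" where "hHd s = (-25106620) + (-119883008) * s + (-6541500) * s^2 + 39703328 * s^3 + 176783425 * s^4 + 142071384 * s^5 + 97986770 * s^6 + 40223008 * s^7 + 13666275 * s^8 + 2949520 * s^9 + 773696 * s^10 + 138432 * s^11 + 25831 * s^12 + 6104 * s^13 + 330 * s^14 + 64 * s^15 + 17 * s^16"

lemma L_Dx: "t_den s = Dx s"
  unfolding t_den_def Dx_def by algebra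
lemma L_Ex: "y_den s = Ex s"
  unfolding y_den_def Ex_def by algebra
lemma L_E: "y_den s = 4 * qp2 s * qp3 s * qp7 s"
  unfolding y_den_def qp2_def qp3_def qp7_def by algebra
lemma L_D: "t_den s = 432 * qp1 s * (qp2 s)^2 * (qp3 s)^2"
  unfolding t_den_def qp1_def qp2_def qp3_def by algebra
lemma L_f: "s * (s^2 + s + 7) = qp1 s * qp3 s"
  unfolding qp1_def qp3_def by algebra
lemma L_A: "4 * (y_num s)^2 * (qp1 s * qp3 s) - (y_den s)^2 = 4 * (qp3 s * (qp4 s)^6 * (qp5 s)^2 * qp6 s * qa5 s)"
  unfolding y_num_def y_den_def qp1_def qp3_def qp4_def qp5_def qp6_def qa5_def by algebra
lemma L_B: "4 * (t_num s)^2 * (qp1 s * qp3 s) - (t_den s)^2 = 4 * (qp1 s * qp3 s * (qp4 s)^7 * (qp5 s)^3 * (qp6 s)^2 * qp8 s)"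
  unfolding t_num_def t_den_def qp1_def qp3_def qp4_def qp5_def qp6_def qp8_def by algebra
lemma L_W: "t_num s * y_den s - y_num s * t_den s = 4 * qp2 s * qp3 s * (qp4 s)^6 * (qp5 s)^2 * qp6 s * qw3 s"
  unfolding t_num_def y_den_def y_num_def t_den_def qp2_def qp3_def qp4_def qp5_def qp6_def qw3_def by algebra
lemma L_Z: "2 * t_num s * y_den s - y_num s * t_den s = 8 * qp2 s * qp3 s * qz15 s"
  unfolding t_num_def y_den_def y_num_def t_den_def qp2_def qp3_def qz15_def by algebra
lemma L_R1: "2 * (qp1 s * qp3 s) * (Nd s * t_den s - t_num s * Dd s) + t_num s * t_den s * fd s = 3024 * qp1 s * qp2 s * (qp3 s)^2 * (qp4 s)^6 * (qp5 s)^2 * qp6 s"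
  unfolding Nd_def t_den_def t_num_def Dd_def fd_def qp1_def qp2_def qp3_def qp4_def qp5_def qp6_def by algebra
lemma L_R2: "2 * (qp1 s * qp3 s) * (Md s * y_den s - y_num s * Ed s) + y_num s * y_den s * fd s = 4 * qp3 s * (qp4 s)^5 * qp5 s * qr10 s"
  unfolding Md_def y_den_def y_num_def Ed_def fd_def qp1_def qp3_def qp4_def qp5_def qr10_def by algebra
lemma L_G: "qp1 s * qp2 s * qp3 s * qr10 s = gG s"
  unfolding qp1_def qp2_def qp3_def qr10_def gG_def by algebra
lemma L_H: "qp4 s * qp5 s * qp6 s * (qp7 s)^2 = hH s"
  unfolding qp4_def qp5_def qp6_def qp7_def hH_def by algebra
lemma L_GH: "gGd s * hH s - gG s * hHd s = - (qp7 s * qK s)"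
  unfolding gGd_def hH_def gG_def hHd_def qp7_def qK_def by algebra
lemma FINAL: "(-46656) * (y_num s) * (qp1 s) * (qp4 s)^6 * (qp5 s)^2 * (qp6 s) * (qp8 s)^2 * (qr10 s)^2 * (qw3 s) + (2519424) * (qa5 s) * (qp1 s) * (qp2 s) * (qp3 s) * (qp4 s)^6 * (qp5 s)^2 * (qp6 s) * (qp8 s)^2 * (qr10 s)^2 + (653184) * (t_num s) * (qa5 s) * (qp4 s)^6 * (qp5 s)^2 * (qp6 s) * (qp7 s) * (qp8 s) * (qr10 s) * (qw3 s) + (-326592) * (qa5 s) * (qp4 s)^7 * (qp5 s)^3 * (qp6 s)^2 * (qp7 s)^2 * (qp8 s)^2 * (qr10 s) + (54867456) * (qa5 s)^2 * (qp2 s) * (qp3 s) * (qp4 s)^12 * (qp5 s)^4 * (qp6 s)^2 * (qw3 s)^2 + (113374080) * (qa5 s)^2 * (qp2 s) * (qp3 s) * (qp4 s)^7 * (qp5 s)^3 * (qp6 s)^2 * (qp7 s)^2 * (qp8 s) + (2985984) * (y_num s) * (qp2 s)^2 * (qp3 s) * (qp7 s)^2 * (qw3 s)^2 * (qz15 s) + (-644972544) * (qp2 s)^5 * (qp3 s)^3 * (qp7 s)^4 * (qw3 s)^2 = (93312) * (qK s) * (qa5 s) * (qp4 s)^6 * (qp5 s)^2 * (qp6 s) * (qp8 s)^2 * (qw3 s)"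
  unfolding qK_def qa5_def qp1_def qp10_def qp2_def qp3_def qp4_def qp5_def qp6_def qp7_def qp8_def qr10_def qw3_def qz15_def y_num_def t_num_def by algebra

lemma d_N: "(t_num has_field_derivative Nd s) (at s)"
  unfolding t_num_def[abs_def]
  apply (rule derivative_eq_intros refl)+
  unfolding Nd_def by (simp add: algebra_simps)
lemma d_M: "(y_num has_field_derivative Md s) (at s)"
  unfolding y_num_def[abs_def]
  apply (rule derivative_eq_intros refl)+
  unfolding Md_def by (simp add: algebra_simps)
lemma d_D: "(t_den has_field_derivative Dd s) (at s)"
proof -
  have e: "t_den = Dx" by (rule ext) (rule L_Dx)
  show ?thesis unfolding e Dx_def[abs_def]
    apply (rule derivative_eq_intros refl)+
    unfolding Dd_def by (simp add: algebra_simps)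
qed
lemma d_E: "(y_den has_field_derivative Ed s) (at s)"
proof -
  have e: "y_den = Ex" by (rule ext) (rule L_Ex)
  show ?thesis unfolding e Ex_def[abs_def]
    apply (rule derivative_eq_intros refl)+
    unfolding Ed_def by (simp add: algebra_simps)
qed
lemma d_G: "(gG has_field_derivative gGd s) (at s)"
  unfolding gG_def[abs_def]
  apply (rule derivative_eq_intros refl)+
  unfolding gGd_def by (simp add: algebra_simps)
lemma d_H: "(hH has_field_derivative hHd s) (at s)"
  unfolding hH_def[abs_def]
  apply (rule derivative_eq_intros refl)+
  unfolding hHd_def by (simp add: algebra_simps)
lemma d_f: "((\<lambda>s. s * (s^2 + s + 7)) has_field_derivative fd s) (at s)"
  apply (rule derivative_eq_intros refl)+
  unfolding fd_def by (simp add: algebra_simps power2_eq_square)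

lemma aux1: "(A::complex) \<noteq> 0 \<Longrightarrow> c*W*f/A - c/(4*A) = c*(4*W*f - 1)/(4*A)"
  by (simp add: field_simps)

lemma aux2:
  fixes A B W f u a b p X :: complex
  assumes "A \<noteq> 0" "B \<noteq> 0" "W \<noteq> 0" "f \<noteq> 0"
  shows "1/2*(2*a*u/A + u/(W*f))*p^2 - (2*b*u/B + u/(W*f))*p + A*W*u/B^2*(2/9 + 45/98*(B/(W^2*f))) + W*u/B^2*X
    = u*((a/A + 1/(2*W*f))*p^2 - (2*b/B + 1/(W*f))*p + W/B^2*(2/9*A + 45/98*A*B/(W^2*f) + X))"
  using assms by (simp add: field_simps)

lemma pvi_reduce:
  fixes y t u a b f \<phi> :: complex
  assumes hy: "y = 1/2 + a*u" and ht: "t = 1/2 + b*u" and hu: "u^2 = f" and u0: "u \<noteq> 0"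
    and t0: "t \<noteq> 0" and t1: "t \<noteq> 1" and y0: "y \<noteq> 0" and y1: "y \<noteq> 1" and yt: "y \<noteq> t"
  shows "PVI_rhs (2/7) (2/7) (2/7) (1/3) t y \<phi> = u * (
      (a/(a^2*f - 1/4) + 1/(2*(a-b)*f)) * \<phi>^2 - (2*b/(b^2*f-1/4) + 1/((a-b)*f)) * \<phi>
      + (a-b)/(b^2*f-1/4)^2 * ((2/9)*(a^2*f - 1/4) + (45/98)*(a^2*f - 1/4)*(b^2*f-1/4)/((a-b)^2*f)
          + (2/49)*(2*a*b - a^2)*f/(a^2*f - 1/4) - (2/49)/(4*(a^2*f - 1/4))))"
proof -
  have f: "f = u^2" using hu by simp
  have A0: "a^2*f - 1/4 = y*(y-1)" unfolding f hy by algebra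
  have B0: "b^2*f - 1/4 = t*(t-1)" unfolding f ht by algebra
  have ab: "(a - b)*u = y - t" unfolding hy ht by algebra
  have y1': "y - 1 \<noteq> 0" and t1': "t - 1 \<noteq> 0" and yt': "y - t \<noteq> 0" using y1 t1 yt by auto
  have A0n: "a^2*f - 1/4 \<noteq> 0" using A0 y0 y1' by simp
  have B0n: "b^2*f - 1/4 \<noteq> 0" using B0 t0 t1' by simp
  have abn: "a - b \<noteq> 0" using ab yt' by auto
  have fn: "f \<noteq> 0" using f u0 by simp
  have ya: "2*a*u = 2*y - 1" using hy by simp
  have tb: "2*b*u = 2*t - 1" using ht by simp
  have e1: "1/y + 1/(y-1) = 2*a*u/(a^2*f-1/4)"
    unfolding A0 ya using y0 y1' by (simp add: field_simps)
  have e2: "1/(y-t) = u/((a-b)*f)"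
  proof -
    have "u/((a-b)*f) = 1/((a-b)*u)" unfolding f using u0 abn by (simp add: field_simps power2_eq_square)
    then show ?thesis using ab by simp
  qed
  have e3: "1/t + 1/(t-1) = 2*b*u/(b^2*f-1/4)"
    unfolding B0 tb using t0 t1' by (simp add: field_simps)
  have e4: "y*(y-1)*(y-t)/(t^2*(t-1)^2) = (a^2*f - 1/4)*(a-b)*u/(b^2*f-1/4)^2"
  proof -
    have "(a^2*f - 1/4)*(a-b)*u = y*(y-1)*(y-t)" using A0 ab by (simp add: mult.assoc)
    then show ?thesis unfolding B0 by (simp add: power_mult_distrib)
  qed
  have e5: "y*(y-1)*((- ((2/7)^2)/2)*t/y^2 + ((2/7)^2/2)*(t-1)/(y-1)^2)
       = (2/49)*(2*a*b - a^2)*f/(a^2*f - 1/4) - (2/49)/(4*(a^2*f - 1/4))"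
  proof -
    have nn: "4*(2*a*b - a^2)*f - 1 = 2*(2*a*u)*(2*b*u) - (2*a*u)^2 - 1" unfolding f by algebra
    have "(2/49)*(2*a*b - a^2)*f/(a^2*f - 1/4) - (2/49)/(4*(a^2*f - 1/4))
        = (2/49)*(4*(2*a*b - a^2)*f - 1)/(4*(a^2*f - 1/4))"
      using aux1[OF A0n] .
    also have "\<dots> = (2/49)*(2*(2*a*u)*(2*b*u) - (2*a*u)^2 - 1)/(4*(a^2*f - 1/4))"
      unfolding nn ..
    also have "\<dots> = (2/49)*(2*(2*y-1)*(2*t-1) - (2*y-1)^2 - 1)/(4*(y*(y-1)))"
      unfolding ya tb A0 ..
    also have "\<dots> = y*(y-1)*((- ((2/7)^2)/2)*t/y^2 + ((2/7)^2/2)*(t-1)/(y-1)^2)"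
      using y0 y1' by (simp add: field_simps) algebra
    finally show ?thesis by simp
  qed
  have e6: "t*(t-1)/(y-t)^2 = (b^2*f-1/4)/((a-b)^2*f)"
  proof -
    have "(b^2*f-1/4)/((a-b)^2*f) = t*(t-1)/((a-b)*u)^2" unfolding B0 by (simp add: f power_mult_distrib)
    then show ?thesis using ab by simp
  qed
  have main: "PVI_rhs (2/7) (2/7) (2/7) (1/3) t y \<phi> =
     1/2*(1/y + 1/(y-1) + 1/(y-t))*\<phi>^2 - (1/t + 1/(t-1) + 1/(y-t))*\<phi>
     + (y*(y-1)*(y-t)/(t^2*(t-1)^2)) * ((2/9) + (45/98) * (t*(t-1)/(y-t)^2))
     + (y-t)/(t^2*(t-1)^2) * (y*(y-1)*((- ((2/7)^2)/2)*t/y^2 + ((2/7)^2/2)*(t-1)/(y-1)^2))"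
    unfolding PVI_rhs_def Let_def using y0 y1' t0 t1' yt'
    apply (simp add: divide_simps)
    by algebra
  have e7: "(y-t)/(t^2*(t-1)^2) = (a-b)*u/(b^2*f-1/4)^2"
    unfolding B0 ab[symmetric] by (simp add: power_mult_distrib)
  show ?thesis
    unfolding main e1 e2 e3 e4 e5 e6 e7
    using aux2[OF A0n B0n abn fn] by simp
qed

lemma C2:
  fixes M N E D f \<phi> \<psi> a b A B W Zs xK xa5 xp1 xp10 xp2 xp3 xp4 xp5 xp6 xp7 xp8 xr10 xw3 xz15 :: complex
  assumes hE: "E = 4*xp2*xp3*xp7" and hD: "D = 432*xp1*xp2^2*xp3^2" and hf: "f = xp1*xp3"
    and ha: "a = -M/E" and hb: "b = -N/D"
    and hA: "A = a^2*f - 1/4" and hB: "B = b^2*f - 1/4" and hW: "W = a - b" and hZ: "Zs = 2*a*b - a^2"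
    and pA: "4*M^2*(xp1*xp3) - E^2 = 4*(xp3*xp4^6*xp5^2*xp6*xa5)"
    and pB: "4*N^2*(xp1*xp3) - D^2 = 4*(xp1*xp3*xp4^7*xp5^3*xp6^2*xp8)"
    and pW: "N*E - M*D = 4*xp2*xp3*xp4^6*xp5^2*xp6*xw3"
    and pZ: "2*N*E - M*D = 8*xp2*xp3*xz15"
    and hphi: "\<phi> = (108/7)*xp1*xp2*xp3*xr10/(xp4*xp5*xp6*xp7^2)"
    and hpsi: "\<psi> = (93312/49)*xK*xp1*xp2^3*xp3^2/(xp4^8*xp5^4*xp6^3*xp7^3)"
    and FIN: "(-46656) * M * xp1 * xp4^6 * xp5^2 * xp6 * xp8^2 * xr10^2 * xw3 + (2519424) * xa5 * xp1 * xp2 * xp3 * xp4^6 * xp5^2 * xp6 * xp8^2 * xr10^2 + (653184) * N * xa5 * xp4^6 * xp5^2 * xp6 * xp7 * xp8 * xr10 * xw3 + (-326592) * xa5 * xp4^7 * xp5^3 * xp6^2 * xp7^2 * xp8^2 * xr10 + (54867456) * xa5^2 * xp2 * xp3 * xp4^12 * xp5^4 * xp6^2 * xw3^2 + (113374080) * xa5^2 * xp2 * xp3 * xp4^7 * xp5^3 * xp6^2 * xp7^2 * xp8 + (2985984) * M * xp2^2 * xp3 * xp7^2 * xw3^2 * xz15 + (-644972544) * xp2^5 * xp3^3 * xp7^4 * xw3^2 = (93312) * xK * xa5 * xp4^6 * xp5^2 * xp6 * xp8^2 * xw3"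
    and nz0: "xp1 \<noteq> 0" "xp2 \<noteq> 0" "xp3 \<noteq> 0" "xp4 \<noteq> 0" "xp5 \<noteq> 0" "xp6 \<noteq> 0" "xp7 \<noteq> 0"
    and An: "A \<noteq> 0" and Bn: "B \<noteq> 0" and Wn: "W \<noteq> 0"
  shows "\<psi> = (a/A + 1/(2*W*f)) * \<phi>^2 - (2*b/B + 1/(W*f)) * \<phi> + W/B^2 * ((2/9)*A + (45/98)*A*B/(W^2*f) + (2/49)*Zs*f/A - (2/49)/(4*A))"
proof -
  have En: "E \<noteq> 0" and Dn: "D \<noteq> 0" and fn: "f \<noteq> 0" using hE hD hf nz0 by auto
  have A: "A = xp3*xp4^6*xp5^2*xp6*xa5/E^2"
  proof -
    have "A = (4*M^2*(xp1*xp3) - E^2)/(4*E^2)" unfolding hA ha hf using En by (simp add: field_simps)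
    then show ?thesis unfolding pA using En by simp
  qed
  have B: "B = xp1*xp3*xp4^7*xp5^3*xp6^2*xp8/D^2"
  proof -
    have "B = (4*N^2*(xp1*xp3) - D^2)/(4*D^2)" unfolding hB hb hf using Dn by (simp add: field_simps)
    then show ?thesis unfolding pB using Dn by simp
  qed
  have W: "W = 4*xp2*xp3*xp4^6*xp5^2*xp6*xw3/(D*E)"
  proof -
    have "W = (N*E - M*D)/(D*E)" unfolding hW ha hb using En Dn by (simp add: field_simps)
    then show ?thesis unfolding pW by simp
  qed
  have Z: "Zs = M*(8*xp2*xp3*xz15)/(D*E^2)"
  proof -
    have "Zs = M*(2*N*E - M*D)/(D*E^2)" unfolding hZ ha hb using En Dn by (simp add: field_simps power2_eq_square)
    then show ?thesis unfolding pZ by simp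
  qed
  have nz: "xp1 \<noteq> 0" "xp2 \<noteq> 0" "xp3 \<noteq> 0" "xp4 \<noteq> 0" "xp5 \<noteq> 0" "xp6 \<noteq> 0" "xp7 \<noteq> 0" "xp8 \<noteq> 0" "xa5 \<noteq> 0" "xw3 \<noteq> 0" using nz0 An Bn Wn A B W En Dn by auto
  have split: "(a/A + 1/(2*W*f)) * \<phi>^2 - (2*b/B + 1/(W*f)) * \<phi> + W/B^2 * ((2/9)*A + (45/98)*A*B/(W^2*f) + (2/49)*Zs*f/A - (2/49)/(4*A)) = (a/A*\<phi>^2) + (1/(2*W*f)*\<phi>^2) + (-(2*b/B*\<phi>)) + (-(1/(W*f)*\<phi>)) + (W/B^2*((2/9)*A)) + (W/B^2*((45/98)*A*B/(W^2*f))) + (W/B^2*((2/49)*Zs*f/A)) + (-(W/B^2*((2/49)/(4*A))))"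
    by (simp add: algebra_simps)
  have t1: "a/A*\<phi>^2 = ((-46656) * M * xp1 * xp4^6 * xp5^2 * xp6 * xp8^2 * xr10^2 * xw3) * ((xp1 * xp2^3 * xp3^2) / (49 * (xa5 * xp4^14 * xp5^6 * xp6^4 * xp7^3 * xp8^2 * xw3)))"
    unfolding A B W Z ha hb hphi hE hD hf using nz apply (simp add: field_simps) apply (algebra)? done
  have t2: "1/(2*W*f)*\<phi>^2 = ((2519424) * xa5 * xp1 * xp2 * xp3 * xp4^6 * xp5^2 * xp6 * xp8^2 * xr10^2) * ((xp1 * xp2^3 * xp3^2) / (49 * (xa5 * xp4^14 * xp5^6 * xp6^4 * xp7^3 * xp8^2 * xw3)))"
    unfolding A B W Z ha hb hphi hE hD hf using nz apply (simp add: field_simps) apply (algebra)? done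
  have t3: "-(2*b/B*\<phi>) = ((653184) * N * xa5 * xp4^6 * xp5^2 * xp6 * xp7 * xp8 * xr10 * xw3) * ((xp1 * xp2^3 * xp3^2) / (49 * (xa5 * xp4^14 * xp5^6 * xp6^4 * xp7^3 * xp8^2 * xw3)))"
    unfolding A B W Z ha hb hphi hE hD hf using nz apply (simp add: field_simps) apply (algebra)? done
  have t4: "-(1/(W*f)*\<phi>) = ((-326592) * xa5 * xp4^7 * xp5^3 * xp6^2 * xp7^2 * xp8^2 * xr10) * ((xp1 * xp2^3 * xp3^2) / (49 * (xa5 * xp4^14 * xp5^6 * xp6^4 * xp7^3 * xp8^2 * xw3)))"
    unfolding A B W Z ha hb hphi hE hD hf using nz apply (simp add: field_simps) apply (algebra)? done
  have t5: "W/B^2*((2/9)*A) = ((54867456) * xa5^2 * xp2 * xp3 * xp4^12 * xp5^4 * xp6^2 * xw3^2) * ((xp1 * xp2^3 * xp3^2) / (49 * (xa5 * xp4^14 * xp5^6 * xp6^4 * xp7^3 * xp8^2 * xw3)))"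
    unfolding A B W Z ha hb hphi hE hD hf using nz apply (simp add: field_simps) apply (algebra)? done
  have t6: "W/B^2*((45/98)*A*B/(W^2*f)) = ((113374080) * xa5^2 * xp2 * xp3 * xp4^7 * xp5^3 * xp6^2 * xp7^2 * xp8) * ((xp1 * xp2^3 * xp3^2) / (49 * (xa5 * xp4^14 * xp5^6 * xp6^4 * xp7^3 * xp8^2 * xw3)))"
    unfolding A B W Z ha hb hphi hE hD hf using nz apply (simp add: field_simps) apply (algebra)? done
  have t7: "W/B^2*((2/49)*Zs*f/A) = ((2985984) * M * xp2^2 * xp3 * xp7^2 * xw3^2 * xz15) * ((xp1 * xp2^3 * xp3^2) / (49 * (xa5 * xp4^14 * xp5^6 * xp6^4 * xp7^3 * xp8^2 * xw3)))"
    unfolding A B W Z ha hb hphi hE hD hf using nz apply (simp add: field_simps) apply (algebra)? done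
  have t8: "-(W/B^2*((2/49)/(4*A))) = ((-644972544) * xp2^5 * xp3^3 * xp7^4 * xw3^2) * ((xp1 * xp2^3 * xp3^2) / (49 * (xa5 * xp4^14 * xp5^6 * xp6^4 * xp7^3 * xp8^2 * xw3)))"
    unfolding A B W Z ha hb hphi hE hD hf using nz apply (simp add: field_simps) apply (algebra)? done
  have p: "\<psi> = ((93312) * xK * xa5 * xp4^6 * xp5^2 * xp6 * xp8^2 * xw3) * ((xp1 * xp2^3 * xp3^2) / (49 * (xa5 * xp4^14 * xp5^6 * xp6^4 * xp7^3 * xp8^2 * xw3)))"
    unfolding hpsi using nz apply (simp add: field_simps) apply (algebra)? done
  show ?thesis unfolding split t1 t2 t3 t4 t5 t6 t7 t8 p
    by (simp only: distrib_right[symmetric] FIN)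
qed

definition phiF :: "complex \<Rightarrow> complex" where
  "phiF s = (108/7) * (gG s / hH s)"

definition phidF :: "complex \<Rightarrow> complex" where
  "phidF s = - (108/7) * qK s / ((qp4 s)^2 * (qp5 s)^2 * (qp6 s)^2 * (qp7 s)^3)"

lemma d_phi:
  assumes "qp4 s \<noteq> 0" "qp5 s \<noteq> 0" "qp6 s \<noteq> 0" "qp7 s \<noteq> 0"
  shows "(phiF has_field_derivative phidF s) (at s)"
proof -
  have Hn: "hH s \<noteq> 0" using L_H[of s] assms by auto
  have d: "((\<lambda>s. (108/7) * (gG s / hH s)) has_field_derivative
      (108/7) * ((gGd s * hH s - gG s * hHd s) / (hH s * hH s))) (at s)"
    by (rule DERIV_cmult[OF DERIV_divide[OF d_G d_H Hn]])
  have "(108/7) * ((gGd s * hH s - gG s * hHd s) / (hH s * hH s)) = phidF s"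
    unfolding L_GH unfolding L_H[symmetric] phidF_def using assms
    apply (simp add: field_simps)
    apply (algebra)?
    done
  then show ?thesis using d unfolding phiF_def[abs_def] by simp
qed

lemma phiF_eq: "phiF s = (108/7) * qp1 s * qp2 s * qp3 s * qr10 s / (qp4 s * qp5 s * qp6 s * (qp7 s)^2)"
  unfolding phiF_def L_G[symmetric] L_H[symmetric] by simp

lemma deriv_const_open:
  assumes "(f has_field_derivative D) (at x)" "open T" "x \<in> T" "\<And>y. y \<in> T \<Longrightarrow> f y = c"
  shows "D = 0"
proof -
  have "((\<lambda>y. c) has_field_derivative D) (at x)"
    by (rule has_field_derivative_transform_within_open[OF assms(1,2,3)]) (simp add: assms(4))
  then show ?thesis by (rule DERIV_unique[OF _ DERIV_const])
qed

lemma deriv_id_open: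
  assumes "(f has_field_derivative D) (at x)" "open T" "x \<in> T" "\<And>y. y \<in> T \<Longrightarrow> f y = y"
  shows "D = 1"
proof -
  have "((\<lambda>y. y) has_field_derivative D) (at x)"
    by (rule has_field_derivative_transform_within_open[OF assms(1,2,3)]) (simp add: assms(4))
  then show ?thesis by (rule DERIV_unique[OF _ DERIV_ident])
qed

lemma local_facts:
  fixes T :: "complex set" and S U :: "complex \<Rightarrow> complex"
  assumes oT: "open T" and hS: "S holomorphic_on T" and hU: "U holomorphic_on T"
    and H: "\<forall>\<tau>\<in>T. on_Pi (S \<tau>) (U \<tau>) \<and> y_den (S \<tau>) \<noteq> 0 \<and> t_den (S \<tau>) \<noteq> 0
                     \<and> t_fun (S \<tau>) (U \<tau>) = \<tau>"
    and tT: "\<tau> \<in> T"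
  shows "((\<lambda>\<tau>. y_fun (S \<tau>) (U \<tau>)) has_field_derivative phiF (S \<tau>)) (at \<tau>)"
    and "deriv S \<tau> * (3024 * qp1 (S \<tau>) * qp2 (S \<tau>) * (qp3 (S \<tau>))^2 * (qp4 (S \<tau>))^6 * (qp5 (S \<tau>))^2 * qp6 (S \<tau>))
          = -2 * U \<tau> * (t_den (S \<tau>))^2"
    and "qp1 (S \<tau>) \<noteq> 0" "qp2 (S \<tau>) \<noteq> 0" "qp3 (S \<tau>) \<noteq> 0" "qp4 (S \<tau>) \<noteq> 0"
        "qp5 (S \<tau>) \<noteq> 0" "qp6 (S \<tau>) \<noteq> 0" "qp7 (S \<tau>) \<noteq> 0"
    and "(U \<tau>)^2 = qp1 (S \<tau>) * qp3 (S \<tau>)" "U \<tau> \<noteq> 0"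
proof -
  define s u s1 u1 where "s = S \<tau>" and "u = U \<tau>" and "s1 = deriv S \<tau>" and "u1 = deriv U \<tau>"
  have dS: "(S has_field_derivative s1) (at \<tau>)" unfolding s1_def by (rule holomorphic_derivI[OF hS oT tT])
  have dU: "(U has_field_derivative u1) (at \<tau>)" unfolding u1_def by (rule holomorphic_derivI[OF hU oT tT])
  have Hon: "u^2 = s*(s^2+s+7)" and En: "y_den s \<noteq> 0" and Dn: "t_den s \<noteq> 0" and tf: "t_fun s u = \<tau>"
    using H tT unfolding on_Pi_def s_def u_def by auto
  have p123: "qp1 s \<noteq> 0" "qp2 s \<noteq> 0" "qp3 s \<noteq> 0" using L_D[of s] Dn by auto
  have p7: "qp7 s \<noteq> 0" using L_E[of s] En by auto
  have u2: "u^2 = qp1 s * qp3 s" using Hon L_f[of s] by simp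
  have u0: "u \<noteq> 0" using u2 p123 by auto
  have r1: "2*u*u1 = fd s * s1"
  proof -
    have d: "((\<lambda>x. U x * U x - S x * ((S x)^2 + S x + 7)) has_field_derivative
              (u1 * U \<tau> + u1 * U \<tau>) - fd (S \<tau>) * s1) (at \<tau>)"
      using DERIV_diff[OF DERIV_mult[OF dU dU] DERIV_chain'[OF dS d_f]] by simp
    have "(u1 * U \<tau> + u1 * U \<tau>) - fd (S \<tau>) * s1 = 0"
    proof (rule deriv_const_open[OF d oT tT])
      fix y assume "y \<in> T"
      then show "U y * U y - S y * ((S y)^2 + S y + 7) = 0"
        using H unfolding on_Pi_def by (auto simp: power2_eq_square)
    qed
    then show ?thesis unfolding s_def u_def by (simp add: algebra_simps)
  qed
  have dT: "((\<lambda>x. 1/2 - t_num (S x) * U x / t_den (S x)) has_field_derivative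
       0 - ((Nd (S \<tau>) * s1 * U \<tau> + u1 * t_num (S \<tau>)) * t_den (S \<tau>) - t_num (S \<tau>) * U \<tau> * (Dd (S \<tau>) * s1))
          / (t_den (S \<tau>) * t_den (S \<tau>))) (at \<tau>)"
    using Dn unfolding s_def
    by (intro DERIV_diff DERIV_const DERIV_divide DERIV_mult DERIV_chain'[OF dS d_N] DERIV_chain'[OF dS d_D] dU)
  have eqT: "0 - ((Nd s * s1 * u + u1 * t_num s) * t_den s - t_num s * u * (Dd s * s1))
          / (t_den s * t_den s) = 1"
    unfolding s_def u_def
  proof (rule deriv_id_open[OF dT oT tT])
    fix y assume "y \<in> T"
    then show "1/2 - t_num (S y) * U y / t_den (S y) = y"
      using H unfolding t_fun_def by auto
  qed
  define Xt where "Xt = (Nd s * s1 * u + u1 * t_num s) * t_den s - t_num s * u * (Dd s * s1)"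
  have Xt: "Xt = - ((t_den s)^2)"
  proof -
    have "0 - Xt / (t_den s * t_den s) = 1" using eqT unfolding Xt_def .
    then have "Xt / (t_den s * t_den s) = -1" by (metis diff_0 minus_minus)
    then show ?thesis using Dn by (simp add: field_simps power2_eq_square)
  qed
  have sR: "s1 * (2 * (qp1 s * qp3 s) * (Nd s * t_den s - t_num s * Dd s) + t_num s * t_den s * fd s) = 2*u*Xt"
  proof -
    have "2*u*Xt = 2*(u^2)*Nd s* s1*t_den s + (2*u*u1)*t_num s*t_den s - 2*(u^2)*t_num s*Dd s* s1"
      unfolding Xt_def by algebra
    also have "\<dots> = 2*(qp1 s * qp3 s)*Nd s* s1*t_den s + (fd s * s1)*t_num s*t_den s - 2*(qp1 s * qp3 s)*t_num s*Dd s* s1"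
      unfolding u2 r1 ..
    finally show ?thesis by algebra
  qed
  have s1R1: "s1 * (3024 * qp1 s * qp2 s * (qp3 s)^2 * (qp4 s)^6 * (qp5 s)^2 * qp6 s) = -2 * u * (t_den s)^2"
  proof -
    have "s1 * (3024 * qp1 s * qp2 s * (qp3 s)^2 * (qp4 s)^6 * (qp5 s)^2 * qp6 s) = 2 * u * (- ((t_den s)^2))"
      using sR unfolding L_R1 Xt .
    also have "2 * u * (- ((t_den s)^2)) = -2 * u * (t_den s)^2" by simp
    finally show ?thesis .
  qed
  have R1n: "3024 * qp1 s * qp2 s * (qp3 s)^2 * (qp4 s)^6 * (qp5 s)^2 * qp6 s \<noteq> 0"
  proof
    assume h: "3024 * qp1 s * qp2 s * (qp3 s)^2 * (qp4 s)^6 * (qp5 s)^2 * qp6 s = 0"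
    have "-2 * u * (t_den s)^2 = 0" using s1R1 unfolding h by simp
    then show False using u0 Dn by simp
  qed
  have p456: "qp4 s \<noteq> 0" "qp5 s \<noteq> 0" "qp6 s \<noteq> 0" using R1n by simp_all
  have dY: "((\<lambda>x. y_fun (S x) (U x)) has_field_derivative
       0 - ((Md (S \<tau>) * s1 * U \<tau> + u1 * y_num (S \<tau>)) * y_den (S \<tau>) - y_num (S \<tau>) * U \<tau> * (Ed (S \<tau>) * s1))
          / (y_den (S \<tau>) * y_den (S \<tau>))) (at \<tau>)"
    using En unfolding s_def y_fun_def
    by (intro DERIV_diff DERIV_const DERIV_divide DERIV_mult DERIV_chain'[OF dS d_M] DERIV_chain'[OF dS d_E] dU)
  define Xy where "Xy = (Md s * s1 * u + u1 * y_num s) * y_den s - y_num s * u * (Ed s * s1)"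
  have sR2: "2*u*Xy = s1 * (2 * (qp1 s * qp3 s) * (Md s * y_den s - y_num s * Ed s) + y_num s * y_den s * fd s)"
  proof -
    have "2*u*Xy = 2*(u^2)*Md s* s1*y_den s + (2*u*u1)*y_num s*y_den s - 2*(u^2)*y_num s*Ed s* s1"
      unfolding Xy_def by algebra
    also have "\<dots> = 2*(qp1 s * qp3 s)*Md s* s1*y_den s + (fd s * s1)*y_num s*y_den s - 2*(qp1 s * qp3 s)*y_num s*Ed s* s1"
      unfolding u2 r1 ..
    finally show ?thesis by algebra
  qed
  have sR2': "2*u*Xy = s1 * (4 * qp3 s * (qp4 s)^5 * qp5 s * qr10 s)"
    using sR2 unfolding L_R2 .
  have s1v: "s1 = -2 * u * (t_den s)^2 / (3024 * qp1 s * qp2 s * (qp3 s)^2 * (qp4 s)^6 * (qp5 s)^2 * qp6 s)"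
    using R1n s1R1 by (metis nonzero_mult_div_cancel_right)
  have "0 - Xy / (y_den s * y_den s) = phiF s"
  proof -
    have "Xy = s1 * (4 * qp3 s * (qp4 s)^5 * qp5 s * qr10 s) / (2*u)" using sR2' u0 by (simp add: field_simps)
    then have "0 - Xy / (y_den s * y_den s) = - (s1 * (4 * qp3 s * (qp4 s)^5 * qp5 s * qr10 s) / (2*u)) / (y_den s * y_den s)"
      by simp
    also have "\<dots> = phiF s"
      unfolding s1v phiF_eq L_E L_D using p123 p456 p7 u0
      by (simp add: field_simps) (algebra?)
    finally show ?thesis .
  qed
  then show "((\<lambda>\<tau>. y_fun (S \<tau>) (U \<tau>)) has_field_derivative phiF (S \<tau>)) (at \<tau>)"
    using dY unfolding Xy_def s_def u_def by simp
  show "deriv S \<tau> * (3024 * qp1 (S \<tau>) * qp2 (S \<tau>) * (qp3 (S \<tau>))^2 * (qp4 (S \<tau>))^6 * (qp5 (S \<tau>))^2 * qp6 (S \<tau>))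
          = -2 * U \<tau> * (t_den (S \<tau>))^2" using s1R1 unfolding s_def u_def s1_def .
  show "qp1 (S \<tau>) \<noteq> 0" "qp2 (S \<tau>) \<noteq> 0" "qp3 (S \<tau>) \<noteq> 0" "qp4 (S \<tau>) \<noteq> 0"
        "qp5 (S \<tau>) \<noteq> 0" "qp6 (S \<tau>) \<noteq> 0" "qp7 (S \<tau>) \<noteq> 0"
    using p123 p456 p7 unfolding s_def by auto
  show "(U \<tau>)^2 = qp1 (S \<tau>) * qp3 (S \<tau>)" "U \<tau> \<noteq> 0" using u2 u0 unfolding s_def u_def by auto
qed

lemma part1:
  fixes T :: "complex set" and S U :: "complex \<Rightarrow> complex"
  assumes oT: "open T" and hS: "S holomorphic_on T" and hU: "U holomorphic_on T"
    and H: "\<forall>\<tau>\<in>T. on_Pi (S \<tau>) (U \<tau>) \<and> y_den (S \<tau>) \<noteq> 0 \<and> t_den (S \<tau>) \<noteq> 0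
                     \<and> t_fun (S \<tau>) (U \<tau>) = \<tau>"
  shows "solves_PVI_on (2/7) (2/7) (2/7) (1/3) (\<lambda>\<tau>. y_fun (S \<tau>) (U \<tau>)) T"
  unfolding solves_PVI_on_def
proof (intro ballI impI)
  fix \<tau> assume tT: "\<tau> \<in> T"
  assume cond: "\<tau> \<noteq> 0 \<and> \<tau> \<noteq> 1 \<and> y_fun (S \<tau>) (U \<tau>) \<noteq> 0 \<and> y_fun (S \<tau>) (U \<tau>) \<noteq> 1 \<and> y_fun (S \<tau>) (U \<tau>) \<noteq> \<tau>"
  define Y where "Y = (\<lambda>\<tau>. y_fun (S \<tau>) (U \<tau>))"
  note LF = local_facts[OF oT hS hU H]
  have dY: "\<And>x. x \<in> T \<Longrightarrow> deriv Y x = phiF (S x)"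
    unfolding Y_def using LF(1) by (rule DERIV_imp_deriv)
  define s u s1 where "s = S \<tau>" and "u = U \<tau>" and "s1 = deriv S \<tau>"
  have dS: "(S has_field_derivative s1) (at \<tau>)" unfolding s1_def by (rule holomorphic_derivI[OF hS oT tT])
  have nz: "qp1 s \<noteq> 0" "qp2 s \<noteq> 0" "qp3 s \<noteq> 0" "qp4 s \<noteq> 0" "qp5 s \<noteq> 0" "qp6 s \<noteq> 0" "qp7 s \<noteq> 0"
    using LF(3-9)[OF tT] unfolding s_def by auto
  have u2: "u^2 = qp1 s * qp3 s" and u0: "u \<noteq> 0" using LF(10,11)[OF tT] unfolding s_def u_def by auto
  have s1R1: "s1 * (3024 * qp1 s * qp2 s * (qp3 s)^2 * (qp4 s)^6 * (qp5 s)^2 * qp6 s) = -2 * u * (t_den s)^2"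
    using LF(2)[OF tT] unfolding s_def u_def s1_def .
  have Hs: "y_den s \<noteq> 0" "t_den s \<noteq> 0" "t_fun s u = \<tau>" using H tT unfolding s_def u_def by auto
  have dd: "((\<lambda>x. phiF (S x)) has_field_derivative phidF s * s1) (at \<tau>)"
    using DERIV_chain'[OF dS d_phi[OF nz(4-7), unfolded s_def]] unfolding s_def by (simp add: mult.commute)
  have dd2: "(deriv Y has_field_derivative phidF s * s1) (at \<tau>)"
    by (rule has_field_derivative_transform_within_open[OF dd oT tT]) (simp add: dY)
  have Ypp: "deriv (deriv Y) \<tau> = phidF s * s1" using dd2 by (rule DERIV_imp_deriv)
  define \<psi> where "\<psi> = (93312/49) * qK s * qp1 s * (qp2 s)^3 * (qp3 s)^2 / ((qp4 s)^8 * (qp5 s)^4 * (qp6 s)^3 * (qp7 s)^3)"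
  have s1v: "s1 = -2 * u * (t_den s)^2 / (3024 * qp1 s * qp2 s * (qp3 s)^2 * (qp4 s)^6 * (qp5 s)^2 * qp6 s)"
  proof -
    have "3024 * qp1 s * qp2 s * (qp3 s)^2 * (qp4 s)^6 * (qp5 s)^2 * qp6 s \<noteq> 0" using nz by simp
    then show ?thesis using s1R1 by (metis nonzero_mult_div_cancel_right)
  qed
  have Ypp2: "deriv (deriv Y) \<tau> = u * \<psi>"
    unfolding Ypp s1v \<psi>_def phidF_def L_D using nz u0 by (simp add: field_simps) (algebra?)
  define a b f where "a = - y_num s / y_den s" and "b = - t_num s / t_den s" and "f = qp1 s * qp3 s"
  have yv: "Y \<tau> = 1/2 + a*u" unfolding Y_def y_fun_def a_def s_def u_def by simp
  have tv: "\<tau> = 1/2 + b*u" using Hs(3) unfolding t_fun_def b_def by simp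
  have Yd: "deriv Y \<tau> = phiF s" using dY[OF tT] unfolding s_def .
  have c1: "Y \<tau> \<noteq> 0" "Y \<tau> \<noteq> 1" "Y \<tau> \<noteq> \<tau>" using cond unfolding Y_def by auto
  have uf: "u^2 = f" unfolding f_def by (rule u2)
  have A0: "a^2*f - 1/4 = Y \<tau> * (Y \<tau> - 1)" unfolding yv uf[symmetric] by algebra
  have B0': "b^2*f - 1/4 = (1/2 + b*u) * ((1/2 + b*u) - 1)" unfolding uf[symmetric] by algebra
  have B0: "b^2*f - 1/4 = \<tau> * (\<tau> - 1)" using B0' tv by simp
  have W0': "(a - b) * u = (1/2 + a*u) - (1/2 + b*u)" by algebra
  have W0: "(a - b) * u = Y \<tau> - \<tau>" using W0' yv tv by simp
  have An: "a^2*f - 1/4 \<noteq> 0" using A0 c1 by simp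
  have Bn: "b^2*f - 1/4 \<noteq> 0" using B0 cond by simp
  have Wn: "a - b \<noteq> 0" using W0 c1 by auto
  have P: "PVI_rhs (2/7) (2/7) (2/7) (1/3) \<tau> (Y \<tau>) \<phi>' = u * (
      (a/(a^2*f - 1/4) + 1/(2*(a-b)*f)) * \<phi>'^2 - (2*b/(b^2*f-1/4) + 1/((a-b)*f)) * \<phi>'
      + (a-b)/(b^2*f-1/4)^2 * ((2/9)*(a^2*f - 1/4) + (45/98)*(a^2*f - 1/4)*(b^2*f-1/4)/((a-b)^2*f)
          + (2/49)*(2*a*b - a^2)*f/(a^2*f - 1/4) - (2/49)/(4*(a^2*f - 1/4))))" for \<phi>'
    by (rule pvi_reduce[OF yv tv uf u0]) (use cond c1 in auto)
  have C: "\<psi> = (a/(a^2*f - 1/4) + 1/(2*(a-b)*f)) * (phiF s)^2 - (2*b/(b^2*f-1/4) + 1/((a-b)*f)) * phiF s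
      + (a-b)/(b^2*f-1/4)^2 * ((2/9)*(a^2*f - 1/4) + (45/98)*(a^2*f - 1/4)*(b^2*f-1/4)/((a-b)^2*f)
          + (2/49)*(2*a*b - a^2)*f/(a^2*f - 1/4) - (2/49)/(4*(a^2*f - 1/4)))"
    by (rule C2[OF L_E L_D f_def a_def b_def refl refl refl refl L_A L_B L_W L_Z phiF_eq \<psi>_def FINAL
            nz An Bn Wn])
  have goal: "deriv (deriv Y) \<tau> = PVI_rhs (2/7) (2/7) (2/7) (1/3) \<tau> (Y \<tau>) (deriv Y \<tau>)"
    unfolding Ypp2 Yd P C ..
  then show "deriv (deriv (\<lambda>\<tau>. y_fun (S \<tau>) (U \<tau>))) \<tau> =
        PVI_rhs (2/7) (2/7) (2/7) (1/3) \<tau> (y_fun (S \<tau>) (U \<tau>)) (deriv (\<lambda>\<tau>. y_fun (S \<tau>) (U \<tau>)) \<tau>)"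
    unfolding Y_def by simp
qed


definition Ap :: "complex poly" where "Ap = [:614656, 12743136, 77394177, 125780088, 139381344, 100538928, 55280652, 22584744, 7439040, 2016448, 380646, 49032, -3360, -3024, -756, -168, 0, 0, 1:]"
definition Bp :: "complex poly" where "Bp = [:0, 64012032, 283481856, 525159936, 554086656, 398442240, 219469824, 92752128, 30046464, 7838208, 1306368, 186624:]"
definition Wp :: "complex poly" where "Wp = pderiv Ap * Bp - Ap * pderiv Bp"

lemma poly_Ap: "poly Ap z = (t_num z)^2"
  unfolding Ap_def t_num_def by simp algebra

lemma poly_Bp: "poly Bp z = 186624 * z * (z+1)^4 * (z^2+z+7)^3"
  unfolding Bp_def by simp algebra

lemma deg_Ap: "degree Ap = 18" unfolding Ap_def by simp
lemma deg_Bp: "degree Bp = 11" unfolding Bp_def by simp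

lemma tden_sq: "(t_den z)^2 = poly Bp z * (z * (z^2 + z + 7))"
  unfolding poly_Bp t_den_def by algebra

lemma tnum_rem: "t_num z = (z^2 + z + 7) * (617 + (-2603) * z + (-750) * z^2 + (-265) * z^3 + (-71) * z^4 + (-6) * z^5 + (-1) * z^6 + 1 * z^7) + (9477 * z - 5103)"
  unfolding t_num_def by algebra

lemma coprime_NB:
  assumes "poly Bp z = 0" shows "t_num z \<noteq> 0"
proof -
  have "z = 0 \<or> z + 1 = 0 \<or> z^2 + z + 7 = 0" using assms unfolding poly_Bp by auto
  moreover have "t_num 0 \<noteq> 0" unfolding t_num_def by simp
  moreover have "t_num (-1) \<noteq> 0" unfolding t_num_def by simp
  moreover have "t_num z \<noteq> 0" if h: "z^2 + z + 7 = 0"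
  proof
    assume "t_num z = 0"
    then have "9477 * z - 5103 = 0" using tnum_rem[of z] h by simp
    then have zv: "z = 7/13" by (simp add: field_simps)
    have "z^2 + z + 7 \<noteq> 0" unfolding zv by (simp add: power2_eq_square)
    then show False using h by simp
  qed
  ultimately show ?thesis by (auto simp: add_eq_0_iff2 neg_eq_iff_add_eq_0[symmetric])
qed

lemma Wp_nz: "Wp \<noteq> 0"
proof -
  have "poly Wp 0 \<noteq> 0" unfolding Wp_def Ap_def Bp_def by (simp add: poly_0_coeff_0 coeff_pderiv)
  then show ?thesis by auto
qed

definition Bad :: "complex set" where
  "Bad = {1/2} \<union> (\<Union>z\<in>{z. poly Wp z = 0}. {c. (1/2 - c)^2 * poly Bp z = poly Ap z})"

lemma finite_Bad: "finite Bad"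
proof -
  have "finite {c. (1/2 - c)^2 * poly Bp z = poly Ap z}" for z
  proof (cases "poly Bp z = 0")
    case True
    then have "poly Ap z \<noteq> 0" using coprime_NB[OF True] unfolding poly_Ap by simp
    then have "{c. (1/2 - c)^2 * poly Bp z = poly Ap z} = {}" using True by auto
    then show ?thesis by simp
  next
    case False
    let ?p = "[:poly Bp z / 4 - poly Ap z, - poly Bp z, poly Bp z:]"
    have "?p \<noteq> 0" using False by simp
    then have "finite {c. poly ?p c = 0}" by (rule poly_roots_finite)
    moreover have "{c. (1/2 - c)^2 * poly Bp z = poly Ap z} \<subseteq> {c. poly ?p c = 0}"
      by (auto simp: algebra_simps power2_eq_square)
    ultimately show ?thesis by (rule finite_subset[rotated])
  qed
  moreover have "finite {z. poly Wp z = 0}" by (rule poly_roots_finite[OF Wp_nz])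
  ultimately show ?thesis unfolding Bad_def by auto
qed

lemma card_fiber:
  assumes cB: "c \<notin> Bad"
  shows "card (t_fiber c) = 18"
proof -
  define k where "k = (1/2 - c)^2"
  have c12: "c \<noteq> 1/2" using cB unfolding Bad_def by auto
  have k0: "k \<noteq> 0" unfolding k_def using c12 by auto
  define Q where "Q = Ap - smult k Bp"
  have polyQ: "poly Q z = (t_num z)^2 - k * poly Bp z" for z unfolding Q_def by (simp add: poly_Ap)
  have degQ: "degree Q = 18"
  proof -
    have "degree (- smult k Bp) < degree Ap" using deg_Ap deg_Bp k0 by simp
    then have "degree (Ap + - smult k Bp) = degree Ap" by (rule degree_add_eq_left)
    then show ?thesis unfolding Q_def using deg_Ap by simp
  qed
  have Q0: "Q \<noteq> 0" using degQ by auto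
  have sqf: "rsquarefree Q"
    unfolding rsquarefree_roots
  proof (intro allI notI)
    fix z assume h: "poly Q z = 0 \<and> poly (pderiv Q) z = 0"
    have e1: "poly Ap z = k * poly Bp z" using h unfolding Q_def by simp
    have e2: "poly (pderiv Ap) z = k * poly (pderiv Bp) z" using h unfolding Q_def by (simp add: pderiv_diff pderiv_smult)
    have "poly Wp z = 0" unfolding Wp_def using e1 e2 by simp
    moreover have "(1/2 - c)^2 * poly Bp z = poly Ap z" using e1 unfolding k_def by simp
    ultimately have "c \<in> Bad" unfolding Bad_def by auto
    then show False using cB by simp
  qed
  define R where "R = {z. poly Q z = 0}"
  have finR: "finite R" unfolding R_def by (rule poly_roots_finite[OF Q0])
  have cardR: "card R = 18"
  proof -
    have dec: "smult (lead_coeff Q) (\<Prod>z\<in>R. [:-z, 1:]) = Q"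
      unfolding R_def by (rule complex_poly_decompose_rsquarefree[OF sqf])
    have lc: "lead_coeff Q \<noteq> 0" using Q0 by simp
    have "degree Q = degree (\<Prod>z\<in>R. [:-z, 1:])" using dec lc by (metis degree_smult_eq)
    also have "\<dots> = (\<Sum>z\<in>R. degree [:-z, 1::complex:])" by (rule degree_prod_sum_eq) simp
    also have "\<dots> = card R" by simp
    finally show ?thesis using degQ by simp
  qed
  have fiber_iff: "(s, u) \<in> t_fiber c \<longleftrightarrow> u^2 = s * (s^2 + s + 7) \<and> t_den s \<noteq> 0 \<and> t_num s * u = (1/2 - c) * t_den s" for s u
  proof -
    have "t_den s \<noteq> 0 \<Longrightarrow> (t_fun s u = c) = (t_num s * u = (1/2 - c) * t_den s)"
      unfolding t_fun_def by (auto simp: field_simps)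
    then show ?thesis unfolding t_fiber_def on_Pi_def by auto
  qed
  have inj: "inj_on fst (t_fiber c)"
  proof (rule inj_onI)
    fix p q assume p: "p \<in> t_fiber c" and q: "q \<in> t_fiber c" and e: "fst p = fst q"
    obtain s u where ps: "p = (s, u)" by (cases p)
    obtain s' u' where qs: "q = (s', u')" by (cases q)
    have ss: "s' = s" using e ps qs by simp
    have h1: "t_num s * u = (1/2 - c) * t_den s" "t_den s \<noteq> 0" using p ps fiber_iff by auto
    have h2: "t_num s * u' = (1/2 - c) * t_den s" using q qs ss fiber_iff by auto
    have N0: "t_num s \<noteq> 0" using h1 c12 by auto
    have "t_num s * u = t_num s * u'" using h1(1) h2 by simp
    then have "u = u'" using N0 by simp
    then show "p = q" using ps qs ss by simp
  qed
  have img: "fst ` t_fiber c = R"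
  proof (intro equalityI subsetI)
    fix s assume "s \<in> fst ` t_fiber c"
    then obtain u where m: "(s, u) \<in> t_fiber c" by auto
    have h: "u^2 = s * (s^2 + s + 7)" "t_den s \<noteq> 0" "t_num s * u = (1/2 - c) * t_den s"
      using m fiber_iff by auto
    have f0: "s * (s^2 + s + 7) \<noteq> 0"
    proof
      assume "s * (s^2 + s + 7) = 0"
      then have "(t_den s)^2 = 0" unfolding tden_sq by simp
      then show False using h(2) by simp
    qed
    have "(t_num s)^2 * (s * (s^2 + s + 7)) = k * (poly Bp s * (s * (s^2 + s + 7)))"
    proof -
      have "(t_num s)^2 * (s * (s^2 + s + 7)) = (t_num s * u)^2" using h(1) by (simp add: power_mult_distrib)
      also have "\<dots> = k * (t_den s)^2" unfolding h(3) k_def by (simp add: power_mult_distrib)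
      finally show ?thesis unfolding tden_sq .
    qed
    then have "(t_num s)^2 = k * poly Bp s" using f0 by simp
    then show "s \<in> R" unfolding R_def polyQ by simp
  next
    fix z assume "z \<in> R"
    then have hz: "(t_num z)^2 = k * poly Bp z" unfolding R_def polyQ by simp
    have B0: "poly Bp z \<noteq> 0"
    proof
      assume "poly Bp z = 0"
      then have "t_num z = 0" using hz by simp
      then show False using coprime_NB[OF \<open>poly Bp z = 0\<close>] by simp
    qed
    have N0: "t_num z \<noteq> 0" using hz B0 k0 by auto
    have f0: "z * (z^2 + z + 7) \<noteq> 0" using B0 unfolding poly_Bp by auto
    have D0: "t_den z \<noteq> 0" using tden_sq[of z] B0 f0 by auto
    define u where "u = (1/2 - c) * t_den z / t_num z"
    have "u^2 = z * (z^2 + z + 7)"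
    proof -
      have "u^2 = k * (t_den z)^2 / (t_num z)^2" unfolding u_def k_def by (simp add: power_divide power_mult_distrib)
      also have "\<dots> = k * (poly Bp z * (z * (z^2 + z + 7))) / (k * poly Bp z)" unfolding tden_sq hz ..
      also have "\<dots> = z * (z^2 + z + 7)" using k0 B0 by simp
      finally show ?thesis .
    qed
    moreover have "t_num z * u = (1/2 - c) * t_den z" unfolding u_def using N0 by simp
    ultimately have "(z, u) \<in> t_fiber c" using D0 fiber_iff by auto
    then show "z \<in> fst ` t_fiber c" by force
  qed
  have "bij_betw fst (t_fiber c) R" using inj img by (simp add: bij_betw_def)
  then have "card (t_fiber c) = card R" by (rule bij_betw_same_card)
  then show ?thesis using cardR by simp
qed

lemma part2: "finite {c. card (t_fiber c) \<noteq> 18}"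
proof (rule finite_subset[OF _ finite_Bad])
  show "{c. card (t_fiber c) \<noteq> 18} \<subseteq> Bad" using card_fiber by blast
qed

theorem mainTheorem14:
  shows "(\<forall>T S U. open T \<and> S holomorphic_on T \<and> U holomorphic_on T \<and>
            (\<forall>\<tau>\<in>T. on_Pi (S \<tau>) (U \<tau>) \<and> y_den (S \<tau>) \<noteq> 0 \<and> t_den (S \<tau>) \<noteq> 0
                     \<and> t_fun (S \<tau>) (U \<tau>) = \<tau>)
          \<longrightarrow> solves_PVI_on (2/7) (2/7) (2/7) (1/3) (\<lambda>\<tau>. y_fun (S \<tau>) (U \<tau>)) T)
       \<and> finite {c. card (t_fiber c) \<noteq> 18}"
  using part1 part2 by blast

end
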